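(* Let $N\ge 4$. Let $q_1,\dots,q_N\in(0,1)$ and $p_{i,k}\in(0,1)$ ($1\le i\le N$, $1\le k\le N-1$) satisfy $p_{i,k}>p_{j,k}$ whenever $i<j$ (for each $k$) and $p_{i,k}<p_{i,l}$ whenever $k<l$ (for each $i$). Let $\mathcal F_N$ be the set of $(N-1)\times N$ matrices over $\mathrm{GF}(2)$ of the form $$\mathbf F=\begin{pmatrix}1&1&0&\cdots&0&0\\ 1&0&1&\cdots&0&0\\ \vdots&\vdots&\vdots&\ddots&\vdots&\vdots\\ 1&0&0&\cdots&1&0\\ u_1&u_2&u_3&\cdots&u_{N-1}&1\end{pmatrix},$$ i.e. for $1\le j\le N-2$ row $j$ has ones exactly in columns $1$ and $j+1$, and the last row is $(u_1,\dots,u_{N-1},1)$ with $u_k\in\mathrm{GF}(2)$ and $u_1\oplus u_2\oplus\cdots\oplus u_{N-1}=1$. Then every element of $\mathcal F_N$ is admissible, and the matrix $$\hat{\mathbf F}_N=\begin{pmatrix}1&1&0&\cdots&0\\ 1&0&1&\cdots&0\\ \vdots&\vdots&\vdots&\ddots&\vdots\\ 1&0&0&\cdots&1\end{pmatrix}_{(N-1)\times N}$$ (row $j$ has ones exactly in columns $1$ and $j+1$, $j=1,\dots,N-1$; this is the element of $\mathcal F_N$ with $u_1=1$, $u_2=\cdots=u_{N-1}=0$) is the unique minimizer of $P_e^U$ over $\mathcal F_N$: $P_e^U(\mathbf F)\ge P_e^U(\hat{\mathbf F}_N)$ for all $\mathbf F\in\mathcal F_N$, with equality only if $\mathbf F=\hat{\mathbf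 F}_N$.
   Context: An $(N-1)\times N$ matrix $\mathbf F$ over $\mathrm{GF}(2)$ is admissible if, for every $j\in\{1,\dots,N\}$, the $(N-1)\times(N-1)$ matrix $\mathbf F_j$ obtained by deleting the $j$-th column of $\mathbf F$ is invertible over $\mathrm{GF}(2)$. For admissible $\mathbf F$, let $\mathbf G_{i,k}$ be the $k$-th column of $\mathbf F_i^{-1}$ (over $\mathrm{GF}(2)$) and $|\mathbf G_{i,k}|$ its Hamming weight. Given numbers $q_k\in(0,1)$ and $p_{i,k}\in(0,1)$, define $$P_e^U(\mathbf F)=\frac1N\sum_{i=1}^N\Big[\sum_{k=1,k\neq i}^N q_k+(N-1)q_i+\sum_{k=1}^{N-1}p_{i,k}\,|\mathbf G_{i,k}|\Big].$$ The class $\mathcal F_N$ consists of the matrices obtained by appending a row and a column to the $(N-1)$-user design $\hat{\mathbf F}_{N-1}$ (placed in the upper-left corner) while keeping all $\mathbf F_j$ invertible. *)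

theory Defs
  imports "HOL-Library.Z2" "Jordan_Normal_Form.Matrix"
begin

text \<open>Matrices over GF(2) are JNF matrices over the field type bit (HOL-Library.Z2).
  JNF indices are 0-based; the paper's 1-based indices are translated explicitly below.\<close>

text \<open>Delete the j-th column (1-based j, as in the paper).\<close>
definition del_col :: "'a mat \<Rightarrow> nat \<Rightarrow> 'a mat" where
  "del_col F j = mat (dim_row F) (dim_col F - 1)
     (\<lambda>(r, c). F $$ (r, if c < j - 1 then c else c + 1))"

definition admissible :: "bit mat \<Rightarrow> bool" where
  "admissible F \<longleftrightarrow> dim_col F = dim_row F + 1 \<and>
     (\<forall>j\<in>{1..dim_col F}. invertible_mat (del_col F j))"

definition mat_inv :: "bit mat \<Rightarrow> bit mat" where
  "mat_inv A = (SOME B. B \<in> carrier_mat (dim_row A) (dim_row A) \<and>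
                        inverts_mat A B \<and> inverts_mat B A)"

definition hamming_weight :: "bit vec \<Rightarrow> nat" where
  "hamming_weight v = card {r. r < dim_vec v \<and> v $ r \<noteq> 0}"

definition Gcol :: "bit mat \<Rightarrow> nat \<Rightarrow> nat \<Rightarrow> bit vec" where
  "Gcol F i k = col (mat_inv (del_col F i)) (k - 1)"

text \<open>The error-probability upper bound P_e^U; q and p are indexed 1-based as in the paper.\<close>
definition PeU :: "nat \<Rightarrow> (nat \<Rightarrow> real) \<Rightarrow> (nat \<Rightarrow> nat \<Rightarrow> real) \<Rightarrow> bit mat \<Rightarrow> real" where
  "PeU N q p F = (1 / real N) * (\<Sum>i = 1..N.
      (\<Sum>k \<in> {1..N} - {i}. q k) + real (N - 1) * q i
      + (\<Sum>k = 1..N - 1. p i k * real (hamming_weight (Gcol F i k))))"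

text \<open>The (N-1) x N matrix with rows j = 1..N-2 having ones in columns 1 and j+1, and last row
  (u_1,...,u_{N-1},1). Here u c (0-based c) stands for the paper's u_{c+1}.\<close>
definition FN_mat :: "nat \<Rightarrow> (nat \<Rightarrow> bit) \<Rightarrow> bit mat" where
  "FN_mat N u = mat (N - 1) N (\<lambda>(r, c).
     if r < N - 2 then (if c = 0 \<or> c = r + 1 then 1 else 0)
     else (if c = N - 1 then 1 else u c))"

definition FN_class :: "nat \<Rightarrow> bit mat set" where
  "FN_class N = {FN_mat N u | u. (\<Sum>c < N - 1. u c) = 1}"

definition F_hat :: "nat \<Rightarrow> bit mat" where
  "F_hat N = mat (N - 1) N (\<lambda>(r, c). if c = 0 \<or> c = r + 1 then 1 else 0)"

end

theory Submission
  imports Defs "Jordan_Normal_Form.Determinant"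
begin

lemma mat_inv_props:
  assumes A: "A \<in> carrier_mat n n" and inv: "invertible_mat A"
  shows "mat_inv A \<in> carrier_mat n n" "mat_inv A * A = 1\<^sub>m n" "A * mat_inv A = 1\<^sub>m n"
proof -
  from inv obtain B where B: "inverts_mat A B" "inverts_mat B A" unfolding invertible_mat_def by auto
  have AB: "A * B = 1\<^sub>m n" using B(1) A unfolding inverts_mat_def by auto
  have Bc: "B \<in> carrier_mat n n"
  proof -
    have "dim_col (A * B) = n" using AB by simp
    hence c: "dim_col B = n" by simp
    have "B * A = 1\<^sub>m (dim_row B)" using B(2) unfolding inverts_mat_def by auto
    hence "dim_col (B * A) = dim_row B" by simp
    hence "dim_row B = n" using A by simp
    thus ?thesis using c by auto
  qed
  have ex: "\<exists>B. B \<in> carrier_mat (dim_row A) (dim_row A) \<and> inverts_mat A B \<and> inverts_mat B A"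
    using Bc B A by auto
  have M: "mat_inv A \<in> carrier_mat (dim_row A) (dim_row A) \<and> inverts_mat A (mat_inv A) \<and> inverts_mat (mat_inv A) A"
    unfolding mat_inv_def by (rule someI_ex[OF ex])
  thus "mat_inv A \<in> carrier_mat n n" using A by auto
  thus "mat_inv A * A = 1\<^sub>m n" "A * mat_inv A = 1\<^sub>m n" using M A unfolding inverts_mat_def by auto
qed

lemma col_mat_inv:
  assumes A: "A \<in> carrier_mat n n" and inv: "invertible_mat A"
    and v: "v \<in> carrier_vec n" and k: "k < n" and eq: "A *\<^sub>v v = unit_vec n k"
  shows "col (mat_inv A) k = v"
proof -
  note M = mat_inv_props[OF A inv]
  have "v = (mat_inv A * A) *\<^sub>v v" using M v by simp
  also have "\<dots> = mat_inv A *\<^sub>v unit_vec n k" using assoc_mult_mat_vec[OF M(1) A v] eq by simp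
  also have "\<dots> = col (mat_inv A) k"
    using M k by (intro eq_vecI) (auto simp: row_def col_def)
  finally show ?thesis by simp
qed

lemma invertible_by_cols:
  fixes A :: "'a :: field mat"
  assumes A: "A \<in> carrier_mat n n" and s: "\<And>k. k < n \<Longrightarrow> s k \<in> carrier_vec n"
    and eq: "\<And>k. k < n \<Longrightarrow> A *\<^sub>v s k = unit_vec n k"
  shows "invertible_mat A"
proof -
  define B where "B = mat n n (\<lambda>(r, c). s c $ r)"
  have Bc: "B \<in> carrier_mat n n" unfolding B_def by simp
  have colB: "col B c = s c" if c: "c < n" for c
  proof -
    have d: "dim_vec (s c) = n" using s[OF c] by auto
    show ?thesis using d c unfolding B_def by (intro eq_vecI) (auto simp: col_def)
  qed
  have AB: "A * B = 1\<^sub>m n"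
  proof (rule eq_matI)
    fix i j assume i: "i < dim_row (1\<^sub>m n :: 'a mat)" and j: "j < dim_col (1\<^sub>m n :: 'a mat)"
    have "(A * B) $$ (i, j) = row A i \<bullet> col B j" using A Bc i j by simp
    also have "\<dots> = (A *\<^sub>v s j) $ i" using A i j colB by simp
    also have "\<dots> = (1\<^sub>m n :: 'a mat) $$ (i, j)" using eq i j by simp
    finally show "(A * B) $$ (i, j) = (1\<^sub>m n :: 'a mat) $$ (i, j)" .
  qed (use A Bc in auto)
  have BA: "B * A = 1\<^sub>m n" by (rule mat_mult_left_right_inverse[OF A Bc AB])
  show ?thesis unfolding invertible_mat_def inverts_mat_def square_mat.simps
    using A Bc AB BA by (intro conjI exI[of _ B]) auto
qed

definition sh :: "nat \<Rightarrow> nat \<Rightarrow> nat" where "sh d c = (if c < d then c else Suc c)"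

lemma sh_inj: "inj_on (sh d) A" unfolding sh_def inj_on_def by auto

lemma sh_image: "d \<le> n \<Longrightarrow> sh d ` {0..<n} = {0..<Suc n} - {d}"
proof (intro equalityI subsetI)
  fix y assume "d \<le> n" "y \<in> {0..<Suc n} - {d}"
  thus "y \<in> sh d ` {0..<n}"
  proof (cases "y < d")
    case True thus ?thesis using \<open>d \<le> n\<close> by (intro image_eqI[of _ _ y]) (auto simp: sh_def)
  next
    case False thus ?thesis using \<open>d \<le> n\<close> \<open>y \<in> {0..<Suc n} - {d}\<close>
      by (intro image_eqI[of _ _ "y - 1"]) (auto simp: sh_def)
  qed
qed (auto simp: sh_def)

lemma sum_sh:
  fixes g :: "nat \<Rightarrow> 'a :: comm_monoid_add"
  assumes d: "d \<le> n" and gd: "g d = 0"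
  shows "(\<Sum>c\<in>{0..<n}. g (sh d c)) = (\<Sum>c<Suc n. g c)"
proof -
  have "(\<Sum>c\<in>{0..<n}. g (sh d c)) = (\<Sum>c\<in>sh d ` {0..<n}. g c)"
    by (rule sum.reindex[OF sh_inj, symmetric, unfolded comp_def])
  also have "\<dots> = (\<Sum>c\<in>{0..<Suc n} - {d}. g c)" using sh_image[OF d] by simp
  also have "\<dots> = (\<Sum>c\<in>{0..<Suc n}. g c)" using gd d by (intro sum.mono_neutral_left) auto
  finally show ?thesis by (simp add: lessThan_atLeast0)
qed

lemma del_col_sol:
  fixes F :: "bit mat"
  assumes F: "F \<in> carrier_mat n (Suc n)" and d: "d \<le> n" and xd: "x d = 0"
  shows "del_col F (Suc d) \<in> carrier_mat n n"
    "vec n (\<lambda>c. x (sh d c)) \<in> carrier_vec n"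
    "r < n \<Longrightarrow> (del_col F (Suc d) *\<^sub>v vec n (\<lambda>c. x (sh d c))) $ r = (\<Sum>c<Suc n. F $$ (r, c) * x c)"
    "hamming_weight (vec n (\<lambda>c. x (sh d c))) = card {c. c < Suc n \<and> x c \<noteq> 0}"
proof -
  show "del_col F (Suc d) \<in> carrier_mat n n" using F unfolding del_col_def by auto
  show "vec n (\<lambda>c. x (sh d c)) \<in> carrier_vec n" by simp
  assume r: "r < n"
  have "(del_col F (Suc d) *\<^sub>v vec n (\<lambda>c. x (sh d c))) $ r
      = (\<Sum>c\<in>{0..<n}. F $$ (r, sh d c) * x (sh d c))"
  proof -
    have dr: "dim_row (del_col F (Suc d)) = n" using F unfolding del_col_def by simp
    show ?thesis
      apply (subst index_mult_mat_vec) using r dr apply simp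
      unfolding scalar_prod_def dim_vec
      apply (intro sum.cong refl)
      using F r unfolding del_col_def by (simp add: sh_def row_def)
  qed
  also have "\<dots> = (\<Sum>c<Suc n. F $$ (r, c) * x c)"
    by (rule sum_sh[OF d, of "\<lambda>c. F $$ (r, c) * x c"]) (simp add: xd)
  finally show "(del_col F (Suc d) *\<^sub>v vec n (\<lambda>c. x (sh d c))) $ r = (\<Sum>c<Suc n. F $$ (r, c) * x c)" .
next
  have "sh d ` {c. c < n \<and> x (sh d c) \<noteq> 0} = {c. c < Suc n \<and> x c \<noteq> 0}"
  proof -
    have "{c. c < n \<and> x (sh d c) \<noteq> 0} = {c \<in> {0..<n}. x (sh d c) \<noteq> 0}" by auto
    hence "sh d ` {c. c < n \<and> x (sh d c) \<noteq> 0} = {y \<in> sh d ` {0..<n}. x y \<noteq> 0}" by auto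
    also have "\<dots> = {c. c < Suc n \<and> x c \<noteq> 0}" using sh_image[OF d] xd by auto
    finally show ?thesis .
  qed
  moreover have "card (sh d ` {c. c < n \<and> x (sh d c) \<noteq> 0}) = card {c. c < n \<and> x (sh d c) \<noteq> 0}"
    by (rule card_image[OF sh_inj])
  ultimately show "hamming_weight (vec n (\<lambda>c. x (sh d c))) = card {c. c < Suc n \<and> x c \<noteq> 0}"
    unfolding hamming_weight_def by (smt (verit) Collect_cong dim_vec index_vec)
qed

declare add_bit_eq_xor[simp del] mult_bit_eq_and[simp del]

lemma FN_carrier: "FN_mat (Suc n) u \<in> carrier_mat n (Suc n)"
  unfolding FN_mat_def by simp

lemma FN_entry: "r < n \<Longrightarrow> c < Suc n \<Longrightarrow> FN_mat (Suc n) u $$ (r, c) =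
   (if r < n - 1 then (if c = 0 \<or> c = Suc r then 1 else 0) else (if c = n then 1 else u c))"
  unfolding FN_mat_def by simp

lemma R1:
  assumes r: "r < n - 1"
  shows "(\<Sum>c<Suc n. FN_mat (Suc n) u $$ (r, c) * x c) = x 0 + x (Suc r)"
proof -
  have "(\<Sum>c<Suc n. FN_mat (Suc n) u $$ (r, c) * x c)
      = (\<Sum>c<Suc n. (if c = 0 then x c else 0) + (if c = Suc r then x c else 0))"
    using r by (intro sum.cong refl) (auto simp: FN_entry)
  also have "\<dots> = x 0 + x (Suc r)" apply (simp add: sum.distrib) using r by arith
  finally show ?thesis .
qed

lemma R2:
  assumes n: "n \<ge> 1"
  shows "(\<Sum>c<Suc n. FN_mat (Suc n) u $$ (n - 1, c) * x c) = (\<Sum>c<n. u c * x c) + x n"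
proof -
  have "(\<Sum>c<Suc n. FN_mat (Suc n) u $$ (n - 1, c) * x c)
     = (\<Sum>c<n. FN_mat (Suc n) u $$ (n - 1, c) * x c) + FN_mat (Suc n) u $$ (n - 1, n) * x n"
    by simp
  also have "(\<Sum>c<n. FN_mat (Suc n) u $$ (n - 1, c) * x c) = (\<Sum>c<n. u c * x c)"
    using n by (intro sum.cong refl) (auto simp: FN_entry)
  also have "FN_mat (Suc n) u $$ (n - 1, n) = 1" using n by (simp add: FN_entry)
  finally show ?thesis by simp
qed

lemma S_delta: "j < (n::nat) \<Longrightarrow> (\<Sum>c<n. u c * of_bool (c = j)) = (u j :: 'a :: comm_semiring_1)"
proof -
  assume j: "j < n"
  have "(\<Sum>c<n. u c * of_bool (c = j)) = (\<Sum>c<n. if c = j then u c else 0)"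
    by (intro sum.cong) auto
  also have "\<dots> = u j" using j by (subst sum.delta) auto
  finally show ?thesis .
qed

lemma S_ndelta: "j < (n::nat) \<Longrightarrow> (\<Sum>c<n. u c * of_bool (c \<noteq> j)) = (\<Sum>c<n. u c) - (u j :: 'a :: comm_ring_1)"
proof -
  assume j: "j < n"
  have "(\<Sum>c<n. u c) = (\<Sum>c<n. u c * of_bool (c \<noteq> j) + u c * of_bool (c = j))"
    by (intro sum.cong refl) auto
  also have "\<dots> = (\<Sum>c<n. u c * of_bool (c \<noteq> j)) + u j"
    using S_delta[OF j, of u] by (simp add: sum.distrib)
  finally show ?thesis by simp
qed

lemma S_cong: "(\<And>c. c < (n::nat) \<Longrightarrow> P c = Q c) \<Longrightarrow> (\<Sum>c<n. u c * of_bool (P c)) = (\<Sum>c<n. u c * of_bool (Q c))"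
  by (intro sum.cong refl) auto

definition Psol :: "nat \<Rightarrow> (nat \<Rightarrow> bit) \<Rightarrow> nat \<Rightarrow> nat \<Rightarrow> nat \<Rightarrow> bool" where
  "Psol n u d k c = (if k = n - 1 then (if d = n then c < n else c = n)
    else if d = n then (if u (Suc k) = 0 then c = Suc k else c < n \<and> c \<noteq> Suc k)
    else if Suc k = d then (c < n \<and> c \<noteq> d) \<or> (c = n \<and> u d = 0)
    else c = Suc k \<or> (c = n \<and> u (Suc k) = 1))"

definition W :: "nat \<Rightarrow> (nat \<Rightarrow> bit) \<Rightarrow> nat \<Rightarrow> nat \<Rightarrow> nat" where
  "W n u d k = (if k = n - 1 then (if d = n then n else 1)
    else if d = n then (if u (Suc k) = 0 then 1 else n - 1)
    else if Suc k = d then (if u d = 0 then n else n - 1)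
    else (if u (Suc k) = 0 then 1 else 2))"

lemma bit_cases: "(a::bit) = 0 \<or> a = 1" by (cases a) auto

lemma sol_zero:
  assumes "d \<le> n" "k < n" shows "\<not> Psol n u d k d"
  using assms unfolding Psol_def by auto

lemma sol_last:
  assumes n3: "n \<ge> 3" and su: "(\<Sum>c<n. u c) = (1::bit)" and d: "d \<le> n" and k: "k < n"
  shows "(\<Sum>c<n. u c * of_bool (Psol n u d k c)) + of_bool (Psol n u d k n) = of_bool (n - 1 = k)"
proof -
  consider "k = n - 1" "d = n" | "k = n - 1" "d \<noteq> n" | "k \<noteq> n - 1" "d = n" "u (Suc k) = 0"
    | "k \<noteq> n - 1" "d = n" "u (Suc k) = 1" | "k \<noteq> n - 1" "d \<noteq> n" "Suc k = d"
    | "k \<noteq> n - 1" "d \<noteq> n" "Suc k \<noteq> d" using bit_cases by blast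
  then show ?thesis
  proof cases
    case 1
    have "(\<Sum>c<n. u c * of_bool (Psol n u d k c)) = (\<Sum>c<n. u c * of_bool True)"
      by (rule S_cong) (use 1 in \<open>auto simp: Psol_def\<close>)
    thus ?thesis using 1 su by (simp add: Psol_def)
  next
    case 2
    have "(\<Sum>c<n. u c * of_bool (Psol n u d k c)) = (\<Sum>c<n. u c * of_bool False)"
      by (rule S_cong) (use 2 in \<open>auto simp: Psol_def\<close>)
    thus ?thesis using 2 by (simp add: Psol_def)
  next
    case 3
    have "(\<Sum>c<n. u c * of_bool (Psol n u d k c)) = (\<Sum>c<n. u c * of_bool (c = Suc k))"
      by (rule S_cong) (use 3 in \<open>auto simp: Psol_def\<close>)
    also have "\<dots> = u (Suc k)" using 3 k by (intro S_delta) auto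
    finally have eq: "(\<Sum>c<n. u c * of_bool (Psol n u d k c)) = u (Suc k)" .
    show ?thesis unfolding eq using 3 k by (simp add: Psol_def)
  next
    case 4
    have "(\<Sum>c<n. u c * of_bool (Psol n u d k c)) = (\<Sum>c<n. u c * of_bool (c \<noteq> Suc k))"
      by (rule S_cong) (use 4 in \<open>auto simp: Psol_def\<close>)
    also have "\<dots> = 1 - u (Suc k)" using 4 k su by (subst S_ndelta) auto
    finally have eq: "(\<Sum>c<n. u c * of_bool (Psol n u d k c)) = 1 - u (Suc k)" .
    show ?thesis unfolding eq using 4 k by (simp add: Psol_def)
  next
    case 5
    have "(\<Sum>c<n. u c * of_bool (Psol n u d k c)) = (\<Sum>c<n. u c * of_bool (c \<noteq> d))"
      by (rule S_cong) (use 5 in \<open>auto simp: Psol_def\<close>)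
    also have "\<dots> = 1 - u d" using 5 d su by (subst S_ndelta) auto
    finally have eq: "(\<Sum>c<n. u c * of_bool (Psol n u d k c)) = 1 - u d" .
    show ?thesis unfolding eq using 5 k d bit_cases[of "u d"] by (auto simp: Psol_def)
  next
    case 6
    have "(\<Sum>c<n. u c * of_bool (Psol n u d k c)) = (\<Sum>c<n. u c * of_bool (c = Suc k))"
      by (rule S_cong) (use 6 in \<open>auto simp: Psol_def\<close>)
    also have "\<dots> = u (Suc k)" using 6 k by (intro S_delta) auto
    finally have eq: "(\<Sum>c<n. u c * of_bool (Psol n u d k c)) = u (Suc k)" .
    show ?thesis unfolding eq using 6 k d bit_cases[of "u (Suc k)"] by (auto simp: Psol_def)
  qed
qed

lemma sol_rows:
  assumes n3: "n \<ge> 3" and su: "(\<Sum>c<n. u c) = (1::bit)" and d: "d \<le> n" and k: "k < n" and r: "r < n"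
  shows "(\<Sum>c<Suc n. FN_mat (Suc n) u $$ (r, c) * of_bool (Psol n u d k c)) = of_bool (r = k)"
proof (cases "r < n - 1")
  case True
  have "of_bool (Psol n u d k 0) + of_bool (Psol n u d k (Suc r)) = (of_bool (r = k) :: bit)"
    using True d k n3 bit_cases[of "u d"] bit_cases[of "u (Suc k)"]
    unfolding Psol_def by auto
  with R1[OF True, of u "\<lambda>c. of_bool (Psol n u d k c)"] show ?thesis by simp
next
  case False
  hence rr: "r = n - 1" using r by simp
  have "(\<Sum>c<Suc n. FN_mat (Suc n) u $$ (n - 1, c) * of_bool (Psol n u d k c))
     = (\<Sum>c<n. u c * of_bool (Psol n u d k c)) + of_bool (Psol n u d k n)"
    by (rule R2) (use n3 in simp)
  also have "\<dots> = of_bool (n - 1 = k)" by (rule sol_last[OF n3 su d k])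
  finally show ?thesis unfolding rr .
qed

lemma sol_card:
  assumes n3: "n \<ge> 3" and d: "d \<le> n" and k: "k < n"
  shows "card {c. c < Suc n \<and> Psol n u d k c} = W n u d k"
proof -
  consider "k = n - 1" "d = n" | "k = n - 1" "d \<noteq> n" | "k \<noteq> n - 1" "d = n" "u (Suc k) = 0"
    | "k \<noteq> n - 1" "d = n" "u (Suc k) = 1" | "k \<noteq> n - 1" "d \<noteq> n" "Suc k = d" "u d = 0"
    | "k \<noteq> n - 1" "d \<noteq> n" "Suc k = d" "u d = 1"
    | "k \<noteq> n - 1" "d \<noteq> n" "Suc k \<noteq> d" "u (Suc k) = 0"
    | "k \<noteq> n - 1" "d \<noteq> n" "Suc k \<noteq> d" "u (Suc k) = 1"
    using bit_cases by blast
  then show ?thesis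
  proof cases
    case 1
    hence "{c. c < Suc n \<and> Psol n u d k c} = {..<n}" by (auto simp: Psol_def)
    thus ?thesis using 1 by (simp add: W_def)
  next
    case 2
    hence "{c. c < Suc n \<and> Psol n u d k c} = {n}" by (auto simp: Psol_def)
    thus ?thesis using 2 by (simp add: W_def)
  next
    case 3
    hence "{c. c < Suc n \<and> Psol n u d k c} = {Suc k}" using k by (auto simp: Psol_def)
    thus ?thesis using 3 by (simp add: W_def)
  next
    case 4
    hence "{c. c < Suc n \<and> Psol n u d k c} = {..<n} - {Suc k}" using k by (auto simp: Psol_def)
    thus ?thesis using 4 k by (simp add: W_def)
  next
    case 5
    hence "{c. c < Suc n \<and> Psol n u d k c} = insert n ({..<n} - {d})" using k by (auto simp: Psol_def)
    thus ?thesis using 5 k d by (simp add: W_def)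
  next
    case 6
    hence "{c. c < Suc n \<and> Psol n u d k c} = {..<n} - {d}" using k by (auto simp: Psol_def)
    thus ?thesis using 6 k d by (simp add: W_def)
  next
    case 7
    hence "{c. c < Suc n \<and> Psol n u d k c} = {Suc k}" using k by (auto simp: Psol_def)
    thus ?thesis using 7 by (simp add: W_def)
  next
    case 8
    hence "{c. c < Suc n \<and> Psol n u d k c} = {Suc k, n}" using k by (auto simp: Psol_def)
    thus ?thesis using 8 k by (simp add: W_def)
  qed
qed

lemma FN_facts:
  assumes n3: "n \<ge> 3" and su: "(\<Sum>c<n. u c) = (1::bit)" and d: "d \<le> n"
  shows "invertible_mat (del_col (FN_mat (Suc n) u) (Suc d))"
    "k < n \<Longrightarrow> hamming_weight (Gcol (FN_mat (Suc n) u) (Suc d) (Suc k)) = W n u d k"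
proof -
  let ?F = "FN_mat (Suc n) u"
  let ?s = "\<lambda>k. vec n (\<lambda>c. (of_bool (Psol n u d k (sh d c)) :: bit))"
  have xd: "\<And>k. k < n \<Longrightarrow> (\<lambda>c. (of_bool (Psol n u d k c) :: bit)) d = 0" using sol_zero[OF d] by simp
  have DS1: "del_col ?F (Suc d) \<in> carrier_mat n n"
    using del_col_sol(1)[where x="\<lambda>c. 0::bit", OF FN_carrier[of n u] d] by simp
  have DS2: "?s k \<in> carrier_vec n" for k by simp
  have DS3: "(del_col ?F (Suc d) *\<^sub>v ?s k) $ r = (\<Sum>c<Suc n. ?F $$ (r, c) * of_bool (Psol n u d k c))"
    if "k < n" "r < n" for k r
    using del_col_sol(3)[where x = "\<lambda>c. (of_bool (Psol n u d k c) :: bit)", OF FN_carrier[of n u] d xd] that by simp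
  have DS4: "hamming_weight (?s k) = card {c. c < Suc n \<and> (of_bool (Psol n u d k c) :: bit) \<noteq> 0}"
    if "k < n" for k
    using del_col_sol(4)[where x = "\<lambda>c. (of_bool (Psol n u d k c) :: bit)", OF FN_carrier[of n u] d xd] that by simp
  have eq: "del_col ?F (Suc d) *\<^sub>v ?s k = unit_vec n k" if k: "k < n" for k
  proof (rule eq_vecI)
    show "dim_vec (del_col ?F (Suc d) *\<^sub>v ?s k) = dim_vec (unit_vec n k :: bit vec)"
      using DS1 by simp
    fix r assume "r < dim_vec (unit_vec n k :: bit vec)"
    hence r: "r < n" by simp
    show "(del_col ?F (Suc d) *\<^sub>v ?s k) $ r = unit_vec n k $ r"
      using DS3[OF k r] sol_rows[OF n3 su d k r] r k by simp
  qed
  show inv: "invertible_mat (del_col ?F (Suc d))"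
    by (rule invertible_by_cols[OF DS1 DS2 eq]) (use n3 in auto)
  assume k: "k < n"
  have "Gcol ?F (Suc d) (Suc k) = ?s k"
    unfolding Gcol_def using col_mat_inv[OF DS1 inv DS2 k eq[OF k]] by simp
  thus "hamming_weight (Gcol ?F (Suc d) (Suc k)) = W n u d k"
    using DS4[OF k] sol_card[OF n3 d k, of u] by simp
qed

definition uh :: "nat \<Rightarrow> bit" where "uh c = (if c = 0 then 1 else 0)"

definition SS :: "nat \<Rightarrow> (nat \<Rightarrow> nat \<Rightarrow> real) \<Rightarrow> (nat \<Rightarrow> bit) \<Rightarrow> real" where
  "SS n p u = (\<Sum>i = 1..Suc n. \<Sum>k = 1..n. p i k * real (W n u (i - 1) (k - 1)))"

lemma PeU_FN:
  assumes n3: "n \<ge> 3" and su: "(\<Sum>c<n. u c) = (1::bit)"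
  shows "PeU (Suc n) q p (FN_mat (Suc n) u) = 1 / real (Suc n) *
     ((\<Sum>i = 1..Suc n. (\<Sum>k \<in> {1..Suc n} - {i}. q k) + real n * q i) + SS n p u)"
proof -
  have "PeU (Suc n) q p (FN_mat (Suc n) u) = 1 / real (Suc n) *
     (\<Sum>i = 1..Suc n. ((\<Sum>k \<in> {1..Suc n} - {i}. q k) + real n * q i)
        + (\<Sum>k = 1..n. p i k * real (W n u (i - 1) (k - 1))))"
    unfolding PeU_def
  proof (intro arg_cong[where f = "\<lambda>x. 1 / real (Suc n) * x"] sum.cong refl)
    fix i assume i: "i \<in> {1..Suc n}"
    have "(\<Sum>k = 1..Suc n - 1. p i k * real (hamming_weight (Gcol (FN_mat (Suc n) u) i k)))
        = (\<Sum>k = 1..n. p i k * real (W n u (i - 1) (k - 1)))"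
    proof (intro sum.cong refl)
      show "{1..Suc n - 1} = {1..n}" by simp
      fix k assume k: "k \<in> {1..n}"
      have "hamming_weight (Gcol (FN_mat (Suc n) u) (Suc (i - 1)) (Suc (k - 1))) = W n u (i - 1) (k - 1)"
        using FN_facts(2)[OF n3 su, of "i - 1" "k - 1"] i k by auto
      thus "p i k * real (hamming_weight (Gcol (FN_mat (Suc n) u) i k)) = p i k * real (W n u (i - 1) (k - 1))"
        using i k by simp
    qed
    thus "(\<Sum>k\<in>{1..Suc n} - {i}. q k) + real (Suc n - 1) * q i +
         (\<Sum>k = 1..Suc n - 1. p i k * real (hamming_weight (Gcol (FN_mat (Suc n) u) i k))) =
         (\<Sum>k\<in>{1..Suc n} - {i}. q k) + real n * q i + (\<Sum>k = 1..n. p i k * real (W n u (i - 1) (k - 1)))"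
      by simp
  qed
  also have "\<dots> = 1 / real (Suc n) *
     ((\<Sum>i = 1..Suc n. (\<Sum>k \<in> {1..Suc n} - {i}. q k) + real n * q i) + SS n p u)"
    unfolding SS_def by (simp add: sum.distrib)
  finally show ?thesis .
qed

lemma uh_sum: "n \<ge> 1 \<Longrightarrow> (\<Sum>c<n. uh c) = 1"
proof -
  assume "n \<ge> 1"
  hence "(\<Sum>c<n. uh c) = (\<Sum>c<n. if c = 0 then 1 else 0)" unfolding uh_def by simp
  also have "\<dots> = 1" using \<open>n \<ge> 1\<close> by (subst sum.delta) auto
  finally show ?thesis .
qed

lemma FN_eq_hat:
  assumes su: "(\<Sum>c<n. u c) = (1::bit)" and z: "\<And>k. 1 \<le> k \<Longrightarrow> k < n \<Longrightarrow> u k = 0" and n: "n \<ge> 1"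
  shows "FN_mat (Suc n) u = F_hat (Suc n)"
proof -
  have "(\<Sum>c<n. u c) = (\<Sum>c<n. if c = 0 then u c else 0)"
    using z by (intro sum.cong refl) auto
  also have "\<dots> = u 0" using n by (subst sum.delta) auto
  finally have u0: "u 0 = 1" using su by simp
  show ?thesis
  proof (rule eq_matI)
    fix i j assume "i < dim_row (F_hat (Suc n))" "j < dim_col (F_hat (Suc n))"
    hence i: "i < n" and j: "j < Suc n" unfolding F_hat_def by auto
    show "FN_mat (Suc n) u $$ (i, j) = F_hat (Suc n) $$ (i, j)"
      using i j u0 z[of j] unfolding FN_mat_def F_hat_def by auto
  qed (auto simp: FN_mat_def F_hat_def)
qed

lemma W0: "k < n - 1 \<Longrightarrow> real (W n u 0 k) - real (W n uh 0 k) = (if u (Suc k) = 1 then 1 else 0)"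
  using bit_cases[of "u (Suc k)"] unfolding W_def uh_def by auto

lemma Wd: "n \<ge> 3 \<Longrightarrow> k < n - 1 \<Longrightarrow> real (W n u (Suc k) k) - real (W n uh (Suc k) k) = (if u (Suc k) = 1 then -1 else 0)"
  using bit_cases[of "u (Suc k)"] unfolding W_def uh_def by auto

lemma Wge: "n \<ge> 3 \<Longrightarrow> d \<le> n \<Longrightarrow> k < n - 1 \<Longrightarrow> d \<noteq> Suc k \<Longrightarrow> W n uh d k \<le> W n u d k"
  unfolding W_def uh_def by auto

lemma Wlast: "W n u d (n - 1) = W n uh d (n - 1)"
  unfolding W_def by simp

lemma Tk:
  assumes n3: "n \<ge> 3" and pos: "\<And>i k. i \<in> {1..Suc n} \<Longrightarrow> k \<in> {1..n} \<Longrightarrow> p i k > 0"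
    and k: "k \<in> {1..n}"
  shows "(\<Sum>i = 1..Suc n. p i k * (real (W n u (i - 1) (k - 1)) - real (W n uh (i - 1) (k - 1))))
     \<ge> (if k < n \<and> u k = 1 then p 1 k - p (Suc k) k else 0)"
proof (cases "k = n")
  case True
  hence "\<And>i. W n u (i - 1) (k - 1) = W n uh (i - 1) (k - 1)" using Wlast by simp
  thus ?thesis using True by simp
next
  case False
  hence kn: "k < n" and k1: "k \<ge> 1" using k by auto
  define k0 where "k0 = k - 1"
  have kk: "k = Suc k0" and k0n: "k0 < n - 1" using kn k1 unfolding k0_def by auto
  let ?f = "\<lambda>i. p i k * (real (W n u (i - 1) (k - 1)) - real (W n uh (i - 1) (k - 1)))"
  have "(\<Sum>i\<in>{1, Suc k}. ?f i) \<le> (\<Sum>i = 1..Suc n. ?f i)"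
  proof (rule sum_mono2)
    show "finite {1..Suc n}" by simp
    show "{1, Suc k} \<subseteq> {1..Suc n}" using kn by auto
    fix b assume b: "b \<in> {1..Suc n} - {1, Suc k}"
    hence "W n uh (b - 1) (k - 1) \<le> W n u (b - 1) (k - 1)"
      using Wge[OF n3, of "b - 1" "k - 1" u] k0n kk by auto
    thus "0 \<le> ?f b" using pos[of b k] b k by (intro mult_nonneg_nonneg) auto
  qed
  moreover have "(\<Sum>i\<in>{1, Suc k}. ?f i) = ?f 1 + ?f (Suc k)" using k1 by simp
  moreover have "?f 1 = p 1 k * (if u k = 1 then 1 else 0)"
    using W0[OF k0n, of u] kk by simp
  moreover have "?f (Suc k) = p (Suc k) k * (if u k = 1 then -1 else 0)"
    using Wd[OF n3 k0n, of u] kk by simp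
  ultimately show ?thesis using kn by (auto split: if_splits)
qed

theorem theorem6:
  fixes N :: nat and q :: "nat \<Rightarrow> real" and p :: "nat \<Rightarrow> nat \<Rightarrow> real"
  assumes N4: "N \<ge> 4"
    and q01: "\<And>k. k \<in> {1..N} \<Longrightarrow> 0 < q k \<and> q k < 1"
    and p01: "\<And>i k. i \<in> {1..N} \<Longrightarrow> k \<in> {1..N - 1} \<Longrightarrow> 0 < p i k \<and> p i k < 1"
    and p_dec: "\<And>i j k. i \<in> {1..N} \<Longrightarrow> j \<in> {1..N} \<Longrightarrow> k \<in> {1..N - 1} \<Longrightarrow>
                  i < j \<Longrightarrow> p i k > p j k"
    and p_inc: "\<And>i k l. i \<in> {1..N} \<Longrightarrow> k \<in> {1..N - 1} \<Longrightarrow> l \<in> {1..N - 1} \<Longrightarrow>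
                  k < l \<Longrightarrow> p i k < p i l"
  shows "(\<forall>F \<in> FN_class N. admissible F) \<and> F_hat N \<in> FN_class N \<and>
         (\<forall>F \<in> FN_class N. PeU N q p F \<ge> PeU N q p (F_hat N) \<and>
                             (PeU N q p F = PeU N q p (F_hat N) \<longrightarrow> F = F_hat N))"
proof -
  obtain n where Nn: "N = Suc n" using N4 by (cases N) auto
  have n3: "n \<ge> 3" using N4 Nn by simp
  have Nm: "N - 1 = n" using Nn by simp
  have pos: "\<And>i k. i \<in> {1..Suc n} \<Longrightarrow> k \<in> {1..n} \<Longrightarrow> p i k > 0"
    using p01 unfolding Nn by auto
  have hat: "F_hat N = FN_mat (Suc n) uh"
    using FN_eq_hat[OF uh_sum, of n] n3 unfolding Nn uh_def by auto
  have cls: "F \<in> FN_class N \<longleftrightarrow> (\<exists>u. F = FN_mat (Suc n) u \<and> (\<Sum>c<n. u c) = 1)" for F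
    unfolding FN_class_def Nn by auto
  have adm: "admissible F" if F: "F \<in> FN_class N" for F
  proof -
    obtain u where u: "F = FN_mat (Suc n) u" "(\<Sum>c<n. u c) = 1" using F cls by auto
    show ?thesis unfolding admissible_def
    proof (intro conjI ballI)
      show "dim_col F = dim_row F + 1" using u FN_carrier[of n u] by auto
      fix j assume "j \<in> {1..dim_col F}"
      hence j: "j = Suc (j - 1)" "j - 1 \<le> n" using u FN_carrier[of n u] by auto
      show "invertible_mat (del_col F j)"
        using FN_facts(1)[OF n3 u(2) j(2)] j(1) u(1) by metis
    qed
  qed
  have hatc: "F_hat N \<in> FN_class N" unfolding cls hat using uh_sum[of n] n3 by auto
  have main: "PeU N q p F \<ge> PeU N q p (F_hat N) \<and> (PeU N q p F = PeU N q p (F_hat N) \<longrightarrow> F = F_hat N)"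
    if F: "F \<in> FN_class N" for F
  proof -
    obtain u where u: "F = FN_mat (Suc n) u" "(\<Sum>c<n. u c) = 1" using F cls by auto
    define A where "A = (\<Sum>i = 1..Suc n. (\<Sum>k \<in> {1..Suc n} - {i}. q k) + real n * q i)"
    have P1: "PeU N q p F = 1 / real (Suc n) * (A + SS n p u)"
      unfolding A_def u(1) Nn by (rule PeU_FN[OF n3 u(2)])
    have P2: "PeU N q p (F_hat N) = 1 / real (Suc n) * (A + SS n p uh)"
      unfolding A_def hat unfolding Nn by (rule PeU_FN[OF n3 uh_sum]) (use n3 in simp)
    define T where "T k = (\<Sum>i = 1..Suc n. p i k * (real (W n u (i - 1) (k - 1)) - real (W n uh (i - 1) (k - 1))))" for k
    define g where "g k = (if k < n \<and> u k = 1 then p 1 k - p (Suc k) k else 0)" for k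
    have diff: "SS n p u - SS n p uh = (\<Sum>k = 1..n. T k)"
    proof -
      have "SS n p u - SS n p uh = (\<Sum>i = 1..Suc n. \<Sum>k = 1..n. p i k * (real (W n u (i - 1) (k - 1)) - real (W n uh (i - 1) (k - 1))))"
        unfolding SS_def by (simp only: right_diff_distrib sum_subtractf)
      also have "\<dots> = (\<Sum>k = 1..n. T k)" unfolding T_def by (rule sum.swap)
      finally show ?thesis .
    qed
    have Tg: "g k \<le> T k" if "k \<in> {1..n}" for k
      unfolding T_def g_def by (rule Tk[OF n3 pos that])
    have g0: "g k \<ge> 0" if "k \<in> {1..n}" for k
    proof -
      have "k < n \<Longrightarrow> p (Suc k) k < p 1 k" using p_dec[of 1 "Suc k" k] that unfolding Nn by auto
      thus ?thesis unfolding g_def by auto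
    qed
    have gT: "(\<Sum>k = 1..n. g k) \<le> (\<Sum>k = 1..n. T k)" by (rule sum_mono[OF Tg])
    have gs: "0 \<le> (\<Sum>k = 1..n. g k)" by (rule sum_nonneg[OF g0])
    have ge: "SS n p uh \<le> SS n p u" using diff gT gs by linarith
    have le: "PeU N q p (F_hat N) \<le> PeU N q p F"
      unfolding P1 P2 using ge by (intro mult_left_mono) auto
    moreover have "F = F_hat N" if eq: "PeU N q p F = PeU N q p (F_hat N)"
    proof -
      have "SS n p u = SS n p uh" using eq unfolding P1 P2 by simp
      hence "(\<Sum>k = 1..n. g k) = 0" using diff gT gs by linarith
      hence gz: "\<forall>k\<in>{1..n}. g k = 0" using sum_nonneg_eq_0_iff[of "{1..n}" g] g0 by auto
      have z: "u k = 0" if "1 \<le> k" "k < n" for k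
      proof (rule ccontr)
        assume "u k \<noteq> 0"
        hence "u k = 1" by simp
        moreover have "p (Suc k) k < p 1 k" using p_dec[of 1 "Suc k" k] that unfolding Nn by auto
        ultimately have "g k > 0" using that unfolding g_def by auto
        thus False using gz that by auto
      qed
      show ?thesis unfolding u(1) Nn using FN_eq_hat[OF u(2) z] n3 by auto
    qed
    ultimately show ?thesis by auto
  qed
  show ?thesis using adm hatc main by auto
qed

end
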